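(* Let $\{(X_i,Y_i)\}_{i\ge 1}$ be a stationary ergodic sequence of random vectors with values in $\mathbb{R}^d\times\mathbb{R}$ such that $E|Y_1|<\infty$, and let $(X,Y)$ denote a random vector with the common distribution of the $(X_i,Y_i)$; let $\mu$ be the distribution of $X$. Let $L>0$ be arbitrary and let $N_n$ be a non-decreasing sequence of positive integers with $N_n\to\infty$. With $S$, $m_L$ and $\hat m_{n,L}$ as defined in the context, the following hold. (a) Almost surely, for all $x\in S$ simultaneously, $\hat m_{n,L}(x)\to m_L(x)$ as $n\to\infty$. (b) If $S$ is a bounded subset of $\mathbb{R}^d$, then almost surely $\sup_{x\in S}|\hat m_{n,L}(x)-m_L(x)|\to 0$. (c) If either (i) $|Y|\le D$ almost surely for some finite constant $D$ (which need not be known), or (ii) $\mu$ has bounded support, then almost surely $\int (\hat m_{n,L}(x)-m_L(x))^2\,\mu(dx)\to 0$.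
   Context: For $k\ge 1$, $\mathcal{P}_k=\{A_{k,i}: i=1,2,\dots\}$ is a partition of $\mathbb{R}^d$ into cubes of volume $(2^{-k-2})^d$ (side length $2^{-k-2}$), and the partitions are nested ($\mathcal{P}_{k+1}$ refines $\mathcal{P}_k$). For $x\in\mathbb{R}^d$, $A_k(x)$ denotes the cell of $\mathcal{P}_k$ containing $x$. The support is $S=\{x\in\mathbb{R}^d: \mu(A_k(x))>0 \text{ for all } k\ge 1\}$. For $x\in S$ put $M_k(x)=E(Y\mid X\in A_k(x))$, and for $k\ge 2$, $\Delta_{k,L}(x)=\mathrm{sign}(M_k(x)-M_{k-1}(x))\min(|M_k(x)-M_{k-1}(x)|,L2^{-k})$, and $m_L(x)=M_1(x)+\sum_{k=2}^\infty \Delta_{k,L}(x)$ (the series converges since $|\Delta_{k,L}|\le L2^{-k}$). Estimator: $\hat M_{k,n}(x)=\frac{\sum_{j=1}^n Y_j 1_{\{X_j\in A_k(x)\}}}{\sum_{j=1}^n 1_{\{X_j\in A_k(x)\}}}$, with $\hat M_{k,n}(x)=0$ if the denominator is $0$; for $k\ge 2$, $\hat\Delta_{k,n,L}(x)=\mathrm{sign}(\hat M_{k,n}(x)-\hat M_{k-1,n}(x))\min(|\hat M_{k,n}(x)-\hat M_{k-1,n}(x)|,L2^{-k})$; and $\hat m_{n,L}(x)=\hat M_{1,n}(x)+\sum_{k=2}^{N_n}\hat\Delta_{k,n,L}(x)$. *)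

theory Defs
  imports "HOL-Probability.Probability"
begin

text \<open>A set C is a cube of side h: it lies between the open and the closed
  axis-parallel box with lower corner a and side length h (any boundary convention).\<close>
definition is_cube :: "'x::euclidean_space set \<Rightarrow> real \<Rightarrow> bool" where
  "is_cube C h \<longleftrightarrow> (\<exists>a. box a (a + h *\<^sub>R One) \<subseteq> C \<and> C \<subseteq> cbox a (a + h *\<^sub>R One))"

definition nested_cube_partitions :: "(nat \<Rightarrow> 'x::euclidean_space \<Rightarrow> 'x set) \<Rightarrow> bool" where
  "nested_cube_partitions A \<longleftrightarrow>
     (\<forall>k\<ge>1. \<forall>x. x \<in> A k x \<and> (\<forall>y\<in>A k x. A k y = A k x) \<and> A k x \<in> sets borel
        \<and> is_cube (A k x) (1 / 2 ^ (k + 2)) \<and> A (Suc k) x \<subseteq> A k x)"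

definition process_law :: "'o measure \<Rightarrow> (nat \<Rightarrow> 'o \<Rightarrow> 'b::topological_space) \<Rightarrow> (nat \<Rightarrow> 'b) measure" where
  "process_law M Z = distr M (Pi\<^sub>M UNIV (\<lambda>_. borel)) (\<lambda>\<omega> i. Z (Suc i) \<omega>)"

definition seq_shift :: "(nat \<Rightarrow> 'b) \<Rightarrow> (nat \<Rightarrow> 'b)" where
  "seq_shift s = (\<lambda>i. s (Suc i))"

definition stationary_ergodic :: "'o measure \<Rightarrow> (nat \<Rightarrow> 'o \<Rightarrow> 'b::topological_space) \<Rightarrow> bool" where
  "stationary_ergodic M Z \<longleftrightarrow>
     (\<forall>i\<ge>1. Z i \<in> borel_measurable M) \<and>
     distr (process_law M Z) (Pi\<^sub>M UNIV (\<lambda>_. borel)) seq_shift = process_law M Z \<and>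
     (\<forall>B \<in> sets (Pi\<^sub>M UNIV (\<lambda>_. borel)).
        seq_shift -` B \<inter> space (Pi\<^sub>M UNIV (\<lambda>_. borel)) = B \<longrightarrow>
        measure (process_law M Z) B = 0 \<or> measure (process_law M Z) B = 1)"

definition clip :: "real \<Rightarrow> real \<Rightarrow> real" where
  "clip c t = sgn t * min \<bar>t\<bar> c"

definition cell_support :: "'x measure \<Rightarrow> (nat \<Rightarrow> 'x \<Rightarrow> 'x set) \<Rightarrow> 'x set" where
  "cell_support \<mu> A = {x. \<forall>k\<ge>1. measure \<mu> (A k x) > 0}"

definition cell_mean :: "'o measure \<Rightarrow> ('o \<Rightarrow> 'x) \<Rightarrow> ('o \<Rightarrow> real) \<Rightarrow> (nat \<Rightarrow> 'x \<Rightarrow> 'x set)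
    \<Rightarrow> nat \<Rightarrow> 'x \<Rightarrow> real" where
  "cell_mean M X Y A k x =
     (\<integral>\<omega>. indicator (A k x) (X \<omega>) * Y \<omega> \<partial>M) / measure M {\<omega>\<in>space M. X \<omega> \<in> A k x}"

definition m_L :: "'o measure \<Rightarrow> ('o \<Rightarrow> 'x) \<Rightarrow> ('o \<Rightarrow> real) \<Rightarrow> (nat \<Rightarrow> 'x \<Rightarrow> 'x set)
    \<Rightarrow> real \<Rightarrow> 'x \<Rightarrow> real" where
  "m_L M X Y A L x = cell_mean M X Y A 1 x +
     (\<Sum>j. clip (L / 2 ^ (j + 2)) (cell_mean M X Y A (j + 2) x - cell_mean M X Y A (j + 1) x))"

definition emp_cell_mean :: "(nat \<Rightarrow> 'o \<Rightarrow> 'x) \<Rightarrow> (nat \<Rightarrow> 'o \<Rightarrow> real) \<Rightarrow> (nat \<Rightarrow> 'x \<Rightarrow> 'x set)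
    \<Rightarrow> nat \<Rightarrow> nat \<Rightarrow> 'x \<Rightarrow> 'o \<Rightarrow> real" where
  "emp_cell_mean X Y A k n x \<omega> =
     (let den = (\<Sum>j\<in>{1..n}. indicator (A k x) (X j \<omega>) :: real)
      in if den = 0 then 0
         else (\<Sum>j\<in>{1..n}. Y j \<omega> * indicator (A k x) (X j \<omega>)) / den)"

definition m_hat :: "(nat \<Rightarrow> 'o \<Rightarrow> 'x) \<Rightarrow> (nat \<Rightarrow> 'o \<Rightarrow> real) \<Rightarrow> (nat \<Rightarrow> 'x \<Rightarrow> 'x set)
    \<Rightarrow> (nat \<Rightarrow> nat) \<Rightarrow> real \<Rightarrow> nat \<Rightarrow> 'x \<Rightarrow> 'o \<Rightarrow> real" where
  "m_hat X Y A N L n x \<omega> = emp_cell_mean X Y A 1 n x \<omega> +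
     (\<Sum>k\<in>{2..N n}. clip (L / 2 ^ k)
        (emp_cell_mean X Y A k n x \<omega> - emp_cell_mean X Y A (k - 1) n x \<omega>))"

end

theory Submission
  imports Defs
begin


context prob_space
begin

lemma mp_iter:
  assumes Tm: "T \<in> M \<rightarrow>\<^sub>M M" and Tp: "distr M M T = M"
  shows "(T ^^ j) \<in> M \<rightarrow>\<^sub>M M \<and> distr M M (T ^^ j) = M"
proof (induction j)
  case 0 then show ?case by (simp add: distr_id2 measurable_ident_sets id_def)
next
  case (Suc j)
  then have m: "(T ^^ Suc j) \<in> M \<rightarrow>\<^sub>M M" using Tm by (simp add: measurable_comp)
  have "distr M M (T ^^ Suc j) = distr M M (T \<circ> (T^^j))" by simp
  also have "\<dots> = distr (distr M M (T^^j)) M T"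
    by (rule distr_distr[symmetric]) (use Suc Tm in auto)
  also have "\<dots> = distr M M T" using Suc by simp
  also have "\<dots> = M" using Tp by simp
  finally have "distr M M (T ^^ Suc j) = M" .
  then show ?case using m by blast
qed

lemma mp_integral:
  assumes Tm: "T \<in> M \<rightarrow>\<^sub>M M" and Tp: "distr M M T = M" and f: "integrable M f"
  shows "integrable M (\<lambda>s. f ((T^^j) s)) \<and> integral\<^sup>L M (\<lambda>s. f ((T^^j) s)) = integral\<^sup>L M (f::_\<Rightarrow>real)"
proof -
  note mi = mp_iter[OF Tm Tp, of j]
  have fm: "f \<in> borel_measurable M" using f by simp
  have "integrable (distr M M (T^^j)) f" using mi f by simp
  then have i: "integrable M (\<lambda>s. f ((T^^j) s))"
    using integrable_distr_eq[OF conjunct1[OF mi] fm] by simp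
  have "integral\<^sup>L M (\<lambda>s. f ((T^^j) s)) = integral\<^sup>L (distr M M (T^^j)) f"
    using integral_distr[OF conjunct1[OF mi] fm] by simp
  also have "\<dots> = integral\<^sup>L M f" using mi by simp
  finally show ?thesis using i by simp
qed

lemma Ssuc: "(\<Sum>j<Suc n. g ((T^^j) s)) = g s + (\<Sum>j<n. g ((T^^j) (T s)))"
  by (simp add: sum.lessThan_Suc_shift funpow_Suc_right del: funpow.simps sum.lessThan_Suc)

lemma maximal:
  assumes Tm: "T \<in> M \<rightarrow>\<^sub>M M" and Tp: "distr M M T = M" and g: "integrable M (g::_\<Rightarrow>real)"
  shows "0 \<le> (\<integral>s. g s * indicator {s\<in>space M. \<exists>n. 0 < (\<Sum>j<n. g ((T^^j) s))} s \<partial>M)"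
proof -
  define S where "S n s = (\<Sum>j<n. g ((T^^j) s))" for n s
  have Tjm[measurable]: "(T^^j) \<in> M \<rightarrow>\<^sub>M M" for j using mp_iter[OF Tm Tp] by blast
  have gm[measurable]: "g \<in> borel_measurable M" using g by simp
  have Sm[measurable]: "S n \<in> borel_measurable M" for n unfolding S_def by measurable
  have Si: "integrable M (S n)" for n
    unfolding S_def by (rule Bochner_Integration.integrable_sum) (use mp_integral[OF Tm Tp g] in blast)
  have S0: "S 0 s = 0" for s by (simp add: S_def)
  have SS: "S (Suc n) s = g s + S n (T s)" for n s unfolding S_def by (rule Ssuc)
  define Mx where "Mx N s = Max ((\<lambda>k. S k s) ` {..N})" for N s
  have Mx_ge: "S k s \<le> Mx N s" if "k \<le> N" for k N s
    unfolding Mx_def using that by (intro Max_ge) auto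
  have Mx_in: "\<exists>k\<le>N. Mx N s = S k s" for N s
  proof -
    have "Mx N s \<in> (\<lambda>k. S k s) ` {..N}" unfolding Mx_def by (intro Max_in) auto
    then show ?thesis by auto
  qed
  have Mx_Suc: "Mx (Suc N) s = max (Mx N s) (S (Suc N) s)" for N s
    unfolding Mx_def atMost_Suc by (simp add: max.commute)
  have Mx_0: "Mx 0 s = 0" for s unfolding Mx_def by (simp add: S0)
  have Mxi: "integrable M (Mx N)" for N
  proof (induction N)
    case 0 then show ?case by (simp add: Mx_0)
  next
    case (Suc N) then show ?case unfolding Mx_Suc using Si by (intro integrable_max) auto
  qed
  have Mx_nn: "0 \<le> Mx N s" for N s using Mx_ge[of 0 N s] S0 by simp
  have Mx_pos: "0 < Mx N s \<longleftrightarrow> (\<exists>k\<le>N. 0 < S k s)" for N s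
    unfolding Mx_def by (subst Max_gr_iff) auto
  define E where "E N = {s\<in>space M. \<exists>k\<le>N. 0 < S k s}" for N
  define E' where "E' = {s\<in>space M. \<exists>n. 0 < S n s}"
  have Em[measurable]: "E N \<in> sets M" for N unfolding E_def by measurable
  have E'm[measurable]: "E' \<in> sets M" unfolding E'_def by measurable
  have key: "Mx N s \<le> g s + Mx N (T s)" if "0 < Mx N s" for N s
  proof -
    obtain k where k: "k \<le> N" "Mx N s = S k s" using Mx_in by blast
    have "k \<noteq> 0" using k that S0 by (metis less_irrefl)
    then obtain k' where k': "k = Suc k'" using not0_implies_Suc by blast
    have "S k' (T s) \<le> Mx N (T s)" using k k' by (intro Mx_ge) auto
    then show ?thesis using k k' SS by simp
  qed
  have pw: "Mx N s - Mx N (T s) \<le> g s * indicator (E N) s" if "s \<in> space M" for N s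
  proof (cases "0 < Mx N s")
    case True
    then have "s \<in> E N" using that Mx_pos unfolding E_def by auto
    then show ?thesis using key[OF True] by simp
  next
    case False
    then have "Mx N s = 0" using Mx_nn[of N s] by simp
    moreover have "s \<notin> E N" using False Mx_pos unfolding E_def by auto
    ultimately show ?thesis using Mx_nn[of N "T s"] by simp
  qed
  have lim: "(\<lambda>N. \<integral>s. g s * indicator (E N) s \<partial>M) \<longlonglongrightarrow> (\<integral>s. g s * indicator E' s \<partial>M)"
  proof (rule integral_dominated_convergence[where w="\<lambda>s. \<bar>g s\<bar>"])
    show "AE x in M. (\<lambda>N. g x * indicator (E N) x) \<longlonglongrightarrow> g x * indicator E' x"
    proof (rule AE_I2)
      fix s assume s: "s \<in> space M"
      show "(\<lambda>N. g s * indicator (E N) s) \<longlonglongrightarrow> g s * indicator E' s"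
      proof (cases "s \<in> E'")
        case True
        then obtain n where n: "0 < S n s" unfolding E'_def by auto
        have "eventually (\<lambda>N. g s * indicator (E N) s = g s * indicator E' s) sequentially"
          unfolding eventually_sequentially
          using True n s by (intro exI[of _ n]) (auto simp: E_def indicator_def)
        then show ?thesis by (rule tendsto_eventually)
      next
        case False
        then have "\<And>N. s \<notin> E N" unfolding E_def E'_def by auto
        then show ?thesis using False by simp
      qed
    qed
    show "\<And>N. AE x in M. norm (g x * indicator (E N) x) \<le> \<bar>g x\<bar>"
      by (auto simp: indicator_def)
  qed (use g in auto)
  have "0 \<le> (\<integral>s. g s * indicator (E N) s \<partial>M)" for N
  proof -
    have "(\<integral>s. Mx N s - Mx N (T s) \<partial>M) \<le> (\<integral>s. g s * indicator (E N) s \<partial>M)"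
    proof (rule integral_mono)
      show "integrable M (\<lambda>s. Mx N s - Mx N (T s))"
        using Mxi mp_integral[OF Tm Tp Mxi[of N], of 1] by (intro Bochner_Integration.integrable_diff) auto
      show "integrable M (\<lambda>s. g s * indicator (E N) s)"
        using g by (intro integrable_real_mult_indicator) auto
    qed (use pw in auto)
    moreover have "(\<integral>s. Mx N s - Mx N (T s) \<partial>M) = 0"
      using Mxi mp_integral[OF Tm Tp Mxi[of N], of 1] by (subst Bochner_Integration.integral_diff) auto
    ultimately show ?thesis by simp
  qed
  then have "0 \<le> (\<integral>s. g s * indicator E' s \<partial>M)"
    using lim by (intro LIMSEQ_le_const) auto
  then show ?thesis unfolding E'_def S_def .
qed


lemma iter_inv:
  assumes Tm: "T \<in> M \<rightarrow>\<^sub>M M" and inv: "\<And>s. s \<in> space M \<Longrightarrow> T s \<in> B \<longleftrightarrow> s \<in> B"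
    and s: "s \<in> space M"
  shows "(T^^j) s \<in> space M \<and> ((T^^j) s \<in> B \<longleftrightarrow> s \<in> B)"
proof (induction j)
  case 0 then show ?case using s by simp
next
  case (Suc j)
  then show ?case using inv[of "(T^^j) s"] Tm by (auto simp: measurable_space)
qed

lemma birk_upper:
  assumes Tm: "T \<in> M \<rightarrow>\<^sub>M M" and Tp: "distr M M T = M"
    and erg: "\<forall>B\<in>sets M. T -` B \<inter> space M = B \<longrightarrow> prob B = 0 \<or> prob B = 1"
    and f: "integrable M (f::_\<Rightarrow>real)" and \<alpha>: "expectation f < \<alpha>"
  shows "AE s in M. \<forall>q::rat. \<alpha> < of_rat q \<longrightarrow> (\<exists>m. \<forall>n\<ge>m. (\<Sum>j<n. f ((T^^j) s)) \<le> real n * of_rat q)"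
proof -
  define S where "S n s = (\<Sum>j<n. f ((T^^j) s))" for n s
  have Tjm[measurable]: "(T^^j) \<in> M \<rightarrow>\<^sub>M M" for j using mp_iter[OF Tm Tp] by blast
  have fm[measurable]: "f \<in> borel_measurable M" using f by simp
  have Sm[measurable]: "S n \<in> borel_measurable M" for n unfolding S_def by measurable
  have SS: "S (Suc n) s = f s + S n (T s)" for n s unfolding S_def by (rule Ssuc)
  define B where "B = {s\<in>space M. \<exists>q::rat. \<alpha> < of_rat q \<and> (\<forall>m. \<exists>n\<ge>m. real n * of_rat q < S n s)}"
  have Bm[measurable]: "B \<in> sets M" unfolding B_def by measurable
  have dense: "\<exists>q'::rat. \<alpha> < of_rat q' \<and> of_rat q' < (of_rat q :: real)" if aq: "\<alpha> < of_rat q" for q :: rat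
  proof -
    obtain r where "r \<in> \<rat>" "\<alpha> < r" "r < of_rat q" using Rats_dense_in_real[OF aq] by blast
    then show ?thesis by (metis Rats_cases)
  qed
  have inv: "T s \<in> B \<longleftrightarrow> s \<in> B" if s: "s \<in> space M" for s
  proof
    have Ts: "T s \<in> space M" using Tm s by (auto simp: measurable_space)
    assume "T s \<in> B"
    then obtain q :: rat where q: "\<alpha> < of_rat q" and io: "\<forall>m. \<exists>n\<ge>m. real n * of_rat q < S n (T s)"
      unfolding B_def by auto
    obtain q' :: rat where q': "\<alpha> < of_rat q'" "of_rat q' < (of_rat q :: real)" using dense[OF q] by blast
    have "\<forall>m. \<exists>n\<ge>m. real n * of_rat q' < S n s"
    proof
      fix m
      define N0 where "N0 = nat \<lceil>(of_rat q' - f s) / (of_rat q - of_rat q')\<rceil>"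
      obtain n where n: "n \<ge> max m N0" "real n * of_rat q < S n (T s)" using io by blast
      have "(of_rat q' - f s) / (of_rat q - of_rat q') \<le> real n"
        using n(1) unfolding N0_def by linarith
      then have "of_rat q' - f s \<le> real n * (of_rat q - of_rat q')"
        using q' by (simp add: pos_divide_le_eq)
      then have "real (Suc n) * of_rat q' < S (Suc n) s"
        using n(2) SS[of n s] by (simp add: algebra_simps)
      then show "\<exists>n\<ge>m. real n * of_rat q' < S n s" using n(1) by (intro exI[of _ "Suc n"]) auto
    qed
    then show "s \<in> B" using q' s unfolding B_def by auto
  next
    have Ts: "T s \<in> space M" using Tm s by (auto simp: measurable_space)
    assume "s \<in> B"
    then obtain q :: rat where q: "\<alpha> < of_rat q" and io: "\<forall>m. \<exists>n\<ge>m. real n * of_rat q < S n s"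
      unfolding B_def by auto
    obtain q' :: rat where q': "\<alpha> < of_rat q'" "of_rat q' < (of_rat q :: real)" using dense[OF q] by blast
    have "\<forall>m. \<exists>n\<ge>m. real n * of_rat q' < S n (T s)"
    proof
      fix m
      define N0 where "N0 = nat \<lceil>(f s - of_rat q) / (of_rat q - of_rat q')\<rceil>"
      obtain n where n: "n \<ge> max (Suc m) (Suc N0)" "real n * of_rat q < S n s" using io by blast
      then obtain n' where n': "n = Suc n'" by (cases n) auto
      have "(f s - of_rat q) / (of_rat q - of_rat q') \<le> real n'"
        using n(1) n' unfolding N0_def by linarith
      then have "f s - of_rat q \<le> real n' * (of_rat q - of_rat q')"
        using q' by (simp add: pos_divide_le_eq)
      then have "real n' * of_rat q' < S n' (T s)"
        using n(2) SS[of n' s] n' by (simp add: algebra_simps)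
      then show "\<exists>n\<ge>m. real n * of_rat q' < S n (T s)" using n(1) n' by (intro exI[of _ n']) auto
    qed
    then show "T s \<in> B" using q' Ts unfolding B_def by auto
  qed
  have Binv: "T -` B \<inter> space M = B"
  proof (intro set_eqI iffI)
    fix s assume "s \<in> T -` B \<inter> space M" then show "s \<in> B" using inv by auto
  next
    fix s assume sB: "s \<in> B" then have "s \<in> space M" unfolding B_def by auto
    then show "s \<in> T -` B \<inter> space M" using inv sB by auto
  qed
  define g where "g s = (f s - \<alpha>) * indicator B s" for s
  have gi: "integrable M g" unfolding g_def using f
    by (intro integrable_real_mult_indicator Bochner_Integration.integrable_diff) auto
  have Sg: "(\<Sum>j<n. g ((T^^j) s)) = indicator B s * (S n s - real n * \<alpha>)" if s: "s \<in> space M" for n s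
  proof -
    have "(\<Sum>j<n. g ((T^^j) s)) = (\<Sum>j<n. indicator B s * (f ((T^^j) s) - \<alpha>))"
      unfolding g_def using iter_inv[OF Tm inv s] by (intro sum.cong) (auto simp: indicator_def)
    also have "\<dots> = indicator B s * (S n s - real n * \<alpha>)"
      unfolding S_def by (simp add: sum_distrib_left sum_subtractf right_diff_distrib)
    finally show ?thesis .
  qed
  have "0 \<le> (\<integral>s. g s * indicator {s\<in>space M. \<exists>n. 0 < (\<Sum>j<n. g ((T^^j) s))} s \<partial>M)"
    by (rule maximal[OF Tm Tp gi])
  also have "\<dots> = (\<integral>s. g s \<partial>M)"
  proof (rule Bochner_Integration.integral_cong[OF refl])
    fix s assume s: "s \<in> space M"
    show "g s * indicator {s\<in>space M. \<exists>n. 0 < (\<Sum>j<n. g ((T^^j) s))} s = g s"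
    proof (cases "s \<in> B")
      case True
      then obtain q :: rat where q: "\<alpha> < of_rat q" and io: "\<forall>m. \<exists>n\<ge>m. real n * of_rat q < S n s"
        unfolding B_def by auto
      obtain n where n: "real n * of_rat q < S n s" using io by blast
      have "real n * \<alpha> \<le> real n * of_rat q" using q by (intro mult_left_mono) auto
      then have "0 < (\<Sum>j<n. g ((T^^j) s))" using Sg[OF s, of n] True n by simp
      then show ?thesis using s by (auto simp: indicator_def)
    next
      case False then show ?thesis by (simp add: g_def)
    qed
  qed
  finally have g0: "0 \<le> (\<integral>s. g s \<partial>M)" .
  have "prob B \<noteq> 1"
  proof
    assume "prob B = 1"
    then have ae: "AE s in M. s \<in> B" by (rule AE_prob_1)
    have "(\<integral>s. g s \<partial>M) = (\<integral>s. f s - \<alpha> \<partial>M)"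
      by (rule integral_cong_AE) (use ae in \<open>auto simp: g_def\<close>)
    also have "\<dots> = expectation f - \<alpha>"
      using f by (subst Bochner_Integration.integral_diff) (auto simp: prob_space)
    finally show False using g0 \<alpha> by simp
  qed
  then have "prob B = 0" using erg Bm Binv by blast
  then have "B \<in> null_sets M" using Bm by (simp add: null_sets_def emeasure_eq_measure)
  then have "AE s in M. s \<notin> B" by (rule AE_not_in)
  then show ?thesis
  proof (rule AE_mp, intro AE_I2 impI allI)
    fix s q assume s: "s \<in> space M" and nB: "s \<notin> B" and q: "\<alpha> < (of_rat q :: real)"
    have "\<not> (\<forall>m. \<exists>n\<ge>m. real n * of_rat q < S n s)" using nB s q unfolding B_def by auto
    then show "\<exists>m. \<forall>n\<ge>m. (\<Sum>j<n. f ((T^^j) s)) \<le> real n * of_rat q"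
      unfolding S_def by (auto simp: not_less)
  qed
qed


lemma birk_upper_all:
  assumes Tm: "T \<in> M \<rightarrow>\<^sub>M M" and Tp: "distr M M T = M"
    and erg: "\<forall>B\<in>sets M. T -` B \<inter> space M = B \<longrightarrow> prob B = 0 \<or> prob B = 1"
    and f: "integrable M (f::_\<Rightarrow>real)"
  shows "AE s in M. \<forall>a::rat. \<forall>q::rat. expectation f < of_rat a \<longrightarrow> (of_rat a::real) < of_rat q \<longrightarrow> (\<exists>m. \<forall>n\<ge>m. (\<Sum>j<n. f ((T^^j) s)) \<le> real n * of_rat q)"
proof -
  have *: "AE s in M. \<forall>q::rat. expectation f < of_rat a \<longrightarrow> (of_rat a::real) < of_rat q \<longrightarrow> (\<exists>m. \<forall>n\<ge>m. (\<Sum>j<n. f ((T^^j) s)) \<le> real n * of_rat q)" for a :: rat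
  proof (cases "expectation f < of_rat a")
    case True
    show ?thesis using birk_upper[OF Tm Tp erg f True] by (rule AE_mp) auto
  qed auto
  show ?thesis by (subst AE_all_countable) (rule allI, rule *)
qed

lemma birkhoff:
  assumes Tm: "T \<in> M \<rightarrow>\<^sub>M M" and Tp: "distr M M T = M"
    and erg: "\<forall>B\<in>sets M. T -` B \<inter> space M = B \<longrightarrow> prob B = 0 \<or> prob B = 1"
    and f: "integrable M (f::_\<Rightarrow>real)"
  shows "AE s in M. (\<lambda>n. (\<Sum>j<n. f ((T^^j) s)) / real n) \<longlonglongrightarrow> expectation f"
proof -
  have f': "integrable M (\<lambda>s. - f s)" using f by simp
  have e': "expectation (\<lambda>s. - f s) = - expectation f" by simp
  note U1 = birk_upper_all[OF Tm Tp erg f]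
  note U2 = birk_upper_all[OF Tm Tp erg f', unfolded e']
  have dense: "\<exists>q::rat. x < of_rat q \<and> of_rat q < y" if xy: "x < y" for x y :: real
  proof -
    obtain r where "r \<in> \<rat>" "x < r" "r < y" using Rats_dense_in_real[OF xy] by blast
    then show ?thesis by (metis Rats_cases)
  qed
  show ?thesis using U1 U2
  proof (rule AE_mp[OF AE_conjI], intro AE_I2 impI)
    fix s assume s: "s \<in> space M"
    assume H: "(\<forall>a q. expectation f < real_of_rat a \<longrightarrow> real_of_rat a < real_of_rat q \<longrightarrow> (\<exists>m. \<forall>n\<ge>m. (\<Sum>j<n. f ((T ^^ j) s)) \<le> real n * real_of_rat q)) \<and>
         (\<forall>a q. - expectation f < real_of_rat a \<longrightarrow> real_of_rat a < real_of_rat q \<longrightarrow> (\<exists>m. \<forall>n\<ge>m. (\<Sum>j<n. - f ((T ^^ j) s)) \<le> real n * real_of_rat q))"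
    define S where "S n = (\<Sum>j<n. f ((T^^j) s))" for n
    show "(\<lambda>n. S n / real n) \<longlonglongrightarrow> expectation f" unfolding S_def[symmetric]
    proof (rule LIMSEQ_I)
      fix r :: real assume r: "0 < r"
      obtain a :: rat where a: "expectation f < of_rat a" "of_rat a < expectation f + r"
        using dense[of "expectation f" "expectation f + r"] r by auto
      obtain q :: rat where q: "(of_rat a::real) < of_rat q" "of_rat q < expectation f + r"
        using dense[OF a(2)] by auto
      obtain m1 where m1: "\<And>n. n \<ge> m1 \<Longrightarrow> S n \<le> real n * of_rat q"
        using H a(1) q(1) unfolding S_def by blast
      obtain a' :: rat where a': "- expectation f < of_rat a'" "of_rat a' < - expectation f + r"
        using dense[of "- expectation f" "- expectation f + r"] r by auto
      obtain q' :: rat where q': "(of_rat a'::real) < of_rat q'" "of_rat q' < - expectation f + r"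
        using dense[OF a'(2)] by auto
      obtain m2 where m2: "\<And>n. n \<ge> m2 \<Longrightarrow> (\<Sum>j<n. - f ((T ^^ j) s)) \<le> real n * of_rat q'"
        using H a'(1) q'(1) by blast
      show "\<exists>no. \<forall>n\<ge>no. norm (S n / real n - expectation f) < r"
      proof (intro exI allI impI)
        fix n assume n: "max 1 (max m1 m2) \<le> n"
        then have np: "0 < real n" by simp
        have "S n \<le> real n * of_rat q" using m1 n by simp
        then have u: "S n / real n \<le> of_rat q" using np by (simp add: divide_le_eq mult.commute)
        have "- S n \<le> real n * of_rat q'" using m2[of n] n unfolding S_def by (simp add: sum_negf)
        then have l: "- of_rat q' \<le> S n / real n" using np by (simp add: le_divide_eq mult.commute)
        show "norm (S n / real n - expectation f) < r" using u l q q' by simp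
      qed
    qed
  qed
qed

end


lemma series_unif:
  fixes u :: "nat \<Rightarrow> nat \<Rightarrow> 'a \<Rightarrow> real" and v :: "nat \<Rightarrow> 'a \<Rightarrow> real" and c :: "nat \<Rightarrow> real"
    and K :: "nat \<Rightarrow> nat"
  assumes c: "summable c" "\<And>j. 0 \<le> c j"
    and ub: "\<And>n j x. x \<in> T \<Longrightarrow> \<bar>u n j x\<bar> \<le> c j"
    and vb: "\<And>j x. x \<in> T \<Longrightarrow> \<bar>v j x\<bar> \<le> c j"
    and ul: "\<And>j. uniform_limit T (\<lambda>n. u n j) (v j) sequentially"
    and K: "filterlim K at_top sequentially"
  shows "uniform_limit T (\<lambda>n x. \<Sum>j<K n. u n j x) (\<lambda>x. \<Sum>j. v j x) sequentially"
  unfolding uniform_limit_iff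
proof (intro allI impI)
  fix e :: real assume e: "0 < e"
  obtain J where J: "\<And>n. n \<ge> J \<Longrightarrow> norm (\<Sum>i. c (i + n)) < e/3"
    using suminf_exist_split[of "e/3" c] e c by auto
  have cJ: "(\<Sum>i. c (i + J)) < e/3" using J[of J] by simp
  have sJ: "summable (\<lambda>i. c (i + J))" using c(1) by (rule summable_ignore_initial_segment)
  have ev1: "\<forall>\<^sub>F n in sequentially. \<forall>j\<in>{..<J}. \<forall>x\<in>T. dist (u n j x) (v j x) < e / (3 * (real J + 1))"
    using ul e unfolding uniform_limit_iff by (intro eventually_ball_finite) (auto simp del: dist_real_def)
  have ev2: "\<forall>\<^sub>F n in sequentially. J \<le> K n" using K by (simp add: filterlim_at_top)
  show "\<forall>\<^sub>F n in sequentially. \<forall>x\<in>T. dist (\<Sum>j<K n. u n j x) (\<Sum>j. v j x) < e"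
    using ev1 ev2
  proof eventually_elim
    case (elim n)
    show ?case
    proof
      fix x assume x: "x \<in> T"
      have sv: "summable (\<lambda>j. v j x)"
        by (rule summable_comparison_test'[where g=c and N=0]) (use c(1) vb[OF x] in auto)
      have s1: "(\<Sum>j<K n. u n j x) = (\<Sum>j<J. u n j x) + (\<Sum>j\<in>{J..<K n}. u n j x)"
      proof -
        have "(\<Sum>j\<in>{0..<J}. u n j x) + (\<Sum>j\<in>{J..<K n}. u n j x) = (\<Sum>j\<in>{0..<K n}. u n j x)"
          by (rule sum.atLeastLessThan_concat) (use elim(2) in auto)
        then show ?thesis by (simp only: atLeast0LessThan)
      qed
      have s2: "(\<Sum>j. v j x) = (\<Sum>i. v (i + J) x) + (\<Sum>j<J. v j x)"
        using sv by (rule suminf_split_initial_segment)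
      have t1: "\<bar>\<Sum>j\<in>{J..<K n}. u n j x\<bar> \<le> (\<Sum>i. c (i + J))"
      proof -
        have "\<bar>\<Sum>j\<in>{J..<K n}. u n j x\<bar> \<le> (\<Sum>j\<in>{J..<K n}. c j)"
          by (rule order_trans[OF sum_abs sum_mono]) (use ub[OF x] in auto)
        also have "\<dots> = (\<Sum>i\<in>{0..<K n - J}. c (i + J))"
          using elim(2) sum.shift_bounds_nat_ivl[of c 0 J "K n - J"] by simp
        also have "\<dots> \<le> (\<Sum>i. c (i + J))"
          using sJ c(2) by (intro sum_le_suminf) auto
        finally show ?thesis .
      qed
      have t2: "\<bar>\<Sum>i. v (i + J) x\<bar> \<le> (\<Sum>i. c (i + J))"
        using norm_suminf_le[of "\<lambda>i. v (i + J) x" "\<lambda>i. c (i + J)"] vb[OF x] sJ by auto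
      have t3: "\<bar>\<Sum>j<J. u n j x - v j x\<bar> \<le> e / 3"
      proof -
        have "\<bar>\<Sum>j<J. u n j x - v j x\<bar> \<le> (\<Sum>j<J. \<bar>u n j x - v j x\<bar>)" by (rule sum_abs)
        also have "\<dots> \<le> (\<Sum>j<J. e / (3 * (real J + 1)))"
          by (intro sum_mono less_imp_le) (use elim(1) x in \<open>auto simp: dist_real_def\<close>)
        also have "\<dots> = real J * (e / (3 * (real J + 1)))" by simp
        also have "\<dots> \<le> e / 3" using e by (simp add: field_simps)
        finally show ?thesis .
      qed
      have "dist (\<Sum>j<K n. u n j x) (\<Sum>j. v j x)
          = \<bar>(\<Sum>j<J. u n j x - v j x) + (\<Sum>j\<in>{J..<K n}. u n j x) - (\<Sum>i. v (i + J) x)\<bar>"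
        unfolding dist_real_def s1 s2 sum_subtractf by (rule arg_cong[where f=abs]) linarith
      also have "\<dots> < e" using t1 t2 t3 cJ by linarith
      finally show "dist (\<Sum>j<K n. u n j x) (\<Sum>j. v j x) < e" .
    qed
  qed
qed


lemma clip_alt: "0 \<le> c \<Longrightarrow> clip c t = max (-c) (min c t)"
  by (auto simp: clip_def sgn_if min_def max_def)

lemma clip_bound: "0 \<le> c \<Longrightarrow> \<bar>clip c t\<bar> \<le> c"
  by (auto simp: clip_alt)

lemma clip_lip: "0 \<le> c \<Longrightarrow> \<bar>clip c s - clip c t\<bar> \<le> \<bar>s - t\<bar>"
  unfolding clip_alt by (auto simp: min_def max_def abs_if)

lemma ratio_lim:
  fixes u v :: "nat \<Rightarrow> real"
  assumes u: "(\<lambda>n. u n / real n) \<longlonglongrightarrow> a" and v: "(\<lambda>n. v n / real n) \<longlonglongrightarrow> p" and p: "0 < p"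
  shows "(\<lambda>n. if v n = 0 then 0 else u n / v n) \<longlonglongrightarrow> a / p"
proof -
  have "(\<lambda>n. (u n / real n) / (v n / real n)) \<longlonglongrightarrow> a / p"
    using u v p by (intro tendsto_divide) auto
  moreover have "eventually (\<lambda>n. 0 < v n / real n) sequentially"
    using order_tendstoD(1)[OF v p] .
  then have "eventually (\<lambda>n. (u n / real n) / (v n / real n) = (if v n = 0 then 0 else u n / v n)) sequentially"
  proof eventually_elim
    case (elim n)
    have "real n \<noteq> 0" using elim by (metis div_by_0 less_irrefl)
    moreover have "v n \<noteq> 0" using elim by (metis div_0 less_irrefl)
    ultimately show ?case by (simp add: field_simps)
  qed
  ultimately show ?thesis by (rule Lim_transform_eventually)
qed

lemma sum_2_reindex: "(\<Sum>k\<in>{2..m}. g k) = (\<Sum>j<m - 1. g (j + 2::nat))"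
proof (induction m)
  case 0 then show ?case by simp
next
  case (Suc m)
  show ?case
  proof (cases "m = 0")
    case True then show ?thesis by simp
  next
    case False
    then have "{2..Suc m} = insert (Suc m) {2..m}" by auto
    moreover have "{..<Suc m - 1} = insert (m - 1) {..<m - 1}" using False by auto
    ultimately show ?thesis using Suc False by simp
  qed
qed

lemma ennreal_tendsto0:
  fixes f :: "nat \<Rightarrow> ennreal"
  assumes "\<And>e::real. 0 < e \<Longrightarrow> eventually (\<lambda>n. f n \<le> ennreal e) sequentially"
  shows "f \<longlonglongrightarrow> 0"
  unfolding order_tendsto_iff
proof (intro conjI allI impI)
  fix l :: ennreal assume "l < 0" then show "eventually (\<lambda>n. l < f n) sequentially" by simp
next
  fix u :: ennreal assume u: "0 < u"
  obtain e :: real where e: "0 < e" "ennreal e < u"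
  proof (cases u)
    case (real r)
    then have "0 < r" using u by simp
    then show ?thesis using that[of "r/2"] real by (simp add: ennreal_less_iff)
  next
    case top then show ?thesis using that[of 1] by simp
  qed
  show "eventually (\<lambda>n. f n < u) sequentially"
    using assms[OF e(1)] by eventually_elim (use e in auto)
qed

lemma summable_c: "summable (\<lambda>j. L / 2 ^ (j + 2) :: real)"
proof -
  have "(\<lambda>j. L / 2 ^ (j + 2) :: real) = (\<lambda>j. (L / 4) * (1/2) ^ j)"
    by (auto simp: power_add field_simps)
  then show ?thesis by (simp add: summable_geometric)
qed


context
  fixes A :: "nat \<Rightarrow> 'x::euclidean_space \<Rightarrow> 'x set"
  assumes ncp: "nested_cube_partitions A"
begin

lemma ncp_cube: "1 \<le> k \<Longrightarrow> \<exists>a. box a (a + (1 / 2 ^ (k + 2)) *\<^sub>R One) \<subseteq> A k x \<and> A k x \<subseteq> cbox a (a + (1 / 2 ^ (k + 2)) *\<^sub>R One)"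
  using ncp unfolding nested_cube_partitions_def is_cube_def by blast

lemma ncp_same: "1 \<le> k \<Longrightarrow> y \<in> A k x \<Longrightarrow> A k y = A k x"
  using ncp unfolding nested_cube_partitions_def by blast

lemma ncp_mem: "1 \<le> k \<Longrightarrow> x \<in> A k x"
  using ncp unfolding nested_cube_partitions_def by blast

lemma ncp_borel: "1 \<le> k \<Longrightarrow> A k x \<in> sets borel"
  using ncp unfolding nested_cube_partitions_def by blast

lemma ncp_diam:
  assumes k: "1 \<le> k" and y: "y \<in> A k x"
  shows "norm (y - x) \<le> DIM('x) / 2 ^ (k + 2)"
proof -
  define h :: real where "h = 1 / 2 ^ (k + 2)"
  obtain a where a: "A k x \<subseteq> cbox a (a + h *\<^sub>R One)" using ncp_cube[OF k] unfolding h_def by blast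
  have x: "x \<in> cbox a (a + h *\<^sub>R One)" using a ncp_mem[OF k] by blast
  have y': "y \<in> cbox a (a + h *\<^sub>R One)" using a y by blast
  have "norm (y - x) \<le> (\<Sum>b\<in>Basis. \<bar>(y - x) \<bullet> b\<bar>)" by (rule norm_le_l1)
  also have "\<dots> \<le> (\<Sum>b\<in>(Basis::'x set). h)"
  proof (rule sum_mono)
    fix b :: 'x assume b: "b \<in> Basis"
    have "a \<bullet> b \<le> x \<bullet> b" "x \<bullet> b \<le> a \<bullet> b + h" "a \<bullet> b \<le> y \<bullet> b" "y \<bullet> b \<le> a \<bullet> b + h"
      using x y' b by (auto simp: mem_box inner_simps)
    then show "\<bar>(y - x) \<bullet> b\<bar> \<le> h" by (simp add: inner_diff_left abs_le_iff)
  qed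
  also have "\<dots> = DIM('x) / 2 ^ (k + 2)" by (simp add: h_def)
  finally show ?thesis .
qed

lemma ncp_dense:
  obtains D where "countable D" "\<And>k x. 1 \<le> k \<Longrightarrow> \<exists>d\<in>D. A k d = A k x"
proof -
  obtain D :: "'x set" where D: "countable D" "\<And>U. open U \<Longrightarrow> U \<noteq> {} \<Longrightarrow> \<exists>d\<in>D. d \<in> U"
    using countable_dense_setE by blast
  have "\<exists>d\<in>D. A k d = A k x" if k: "1 \<le> k" for k x
  proof -
    define h :: real where "h = 1 / 2 ^ (k + 2)"
    have h: "0 < h" by (simp add: h_def)
    obtain a where a: "box a (a + h *\<^sub>R One) \<subseteq> A k x" using ncp_cube[OF k] unfolding h_def by blast
    have "box a (a + h *\<^sub>R One) \<noteq> {}" using h by (simp add: box_ne_empty inner_simps)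
    then obtain d where d: "d \<in> D" "d \<in> box a (a + h *\<^sub>R One)" using D(2)[OF open_box] by blast
    then show ?thesis using a ncp_same[OF k] by blast
  qed
  then show ?thesis using that D(1) by blast
qed

lemma ncp_finite:
  assumes T: "bounded T" and k: "1 \<le> k"
  shows "finite ((\<lambda>x. A k x) ` T)"
proof (rule ccontr)
  assume inf: "infinite ((\<lambda>x. A k x) ` T)"
  define h :: real where "h = 1 / 2 ^ (k + 2)"
  have h: "0 < h" by (simp add: h_def)
  obtain R where R: "\<And>x. x \<in> T \<Longrightarrow> norm x \<le> R" using T by (auto simp: bounded_iff)
  define R' where "R' = R + DIM('x) / 2 ^ (k + 2)"
  have sub: "A k x \<subseteq> cball 0 R'" if "x \<in> T" for x
  proof
    fix y assume y: "y \<in> A k x"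
    have "norm y \<le> norm x + norm (y - x)" by (metis add.commute diff_add_cancel norm_triangle_ineq)
    also have "\<dots> \<le> R'" unfolding R'_def using R[OF that] ncp_diam[OF k y] by simp
    finally show "y \<in> cball 0 R'" by simp
  qed
  define V where "V = measure lborel (cball (0::'x) R')"
  have V: "emeasure lborel (cball (0::'x) R') = ennreal V"
  proof -
    have fin: "emeasure lborel (cball (0::'x) R') \<noteq> \<top>"
      using emeasure_bounded_finite[of "cball (0::'x) R'"] by simp
    show ?thesis unfolding V_def by (rule emeasure_eq_ennreal_measure[OF fin])
  qed
  have cellm: "ennreal (h ^ DIM('x)) \<le> emeasure lborel (A k x)" for x
  proof -
    obtain a where a: "box a (a + h *\<^sub>R One) \<subseteq> A k x" using ncp_cube[OF k] unfolding h_def by blast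
    have "emeasure lborel (box a (a + h *\<^sub>R One)) = ennreal (h ^ DIM('x))"
      using h by (simp add: emeasure_lborel_box_eq inner_simps prod_constant)
    moreover have "emeasure lborel (box a (a + h *\<^sub>R One)) \<le> emeasure lborel (A k x)"
      using a ncp_borel[OF k] by (intro emeasure_mono) auto
    ultimately show ?thesis by simp
  qed
  define n where "n = nat \<lceil>V / h ^ DIM('x)\<rceil> + 1"
  obtain F0 where F0: "finite F0" "card F0 = n" "F0 \<subseteq> (\<lambda>x. A k x) ` T"
    using infinite_arbitrarily_large[OF inf] by blast
  have disj: "disjoint_family_on id F0"
    unfolding disjoint_family_on_def
  proof (intro ballI impI)
    fix C C' assume CC: "C \<in> F0" "C' \<in> F0" "C \<noteq> C'"
    then obtain x x' where "C = A k x" "C' = A k x'" using F0(3) by blast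
    then show "id C \<inter> id C' = {}" using CC(3) ncp_same[OF k] by (metis disjoint_iff id_apply)
  qed
  have "ennreal (real n * h ^ DIM('x)) = (\<Sum>C\<in>F0. ennreal (h ^ DIM('x)))"
    using F0(2) h by (simp add: ennreal_of_nat_eq_real_of_nat ennreal_mult)
  also have "\<dots> \<le> (\<Sum>C\<in>F0. emeasure lborel C)"
    using F0(3) cellm by (intro sum_mono) auto
  also have "\<dots> = emeasure lborel (\<Union>C\<in>F0. id C)"
  proof -
    have "id ` F0 \<subseteq> sets lborel" using F0(3) ncp_borel[OF k] by auto
    then show ?thesis using sum_emeasure[of id F0 lborel] F0(1) disj by simp
  qed
  also have "\<dots> \<le> emeasure lborel (cball (0::'x) R')"
    using F0(3) sub by (intro emeasure_mono) auto
  also have "\<dots> = ennreal V" by (rule V)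
  finally have le: "real n * h ^ DIM('x) \<le> V"
    by (subst (asm) ennreal_le_iff) (auto simp: V_def)
  have "V / h ^ DIM('x) < real n" unfolding n_def by linarith
  then have "V < real n * h ^ DIM('x)" using h by (simp add: divide_less_eq)
  then show False using le by simp
qed

end


lemma shift_iter: "(seq_shift ^^ j) s = (\<lambda>i. s (i + j))"
  by (induction j arbitrary: s) (auto simp: seq_shift_def funpow_Suc_right simp del: funpow.simps)

lemma erg_lln:
  fixes Z :: "nat \<Rightarrow> 'o \<Rightarrow> 'b::topological_space" and F :: "'b \<Rightarrow> real"
  assumes M: "prob_space M" and se: "stationary_ergodic M Z"
    and Fm: "F \<in> borel_measurable borel" and Fi: "integrable M (\<lambda>\<omega>. F (Z 1 \<omega>))"
  shows "AE \<omega> in M. (\<lambda>n. (\<Sum>j\<in>{1..n}. F (Z j \<omega>)) / real n) \<longlonglongrightarrow> (\<integral>\<omega>. F (Z 1 \<omega>) \<partial>M)"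
proof -
  define \<Omega> where "\<Omega> = (Pi\<^sub>M UNIV (\<lambda>_. borel) :: (nat \<Rightarrow> 'b) measure)"
  define P where "P = process_law M Z"
  define \<Phi> where "\<Phi> = (\<lambda>\<omega> i. Z (Suc i) \<omega>)"
  have Zm: "Z (Suc i) \<in> borel_measurable M" for i using se unfolding stationary_ergodic_def by auto
  have \<Phi>m: "\<Phi> \<in> M \<rightarrow>\<^sub>M \<Omega>" unfolding \<Phi>_def \<Omega>_def
    by (rule measurable_PiM_single') (use Zm in \<open>auto simp: measurable_space\<close>)
  have P_def': "P = distr M \<Omega> \<Phi>" unfolding P_def process_law_def \<Omega>_def \<Phi>_def ..
  have Pp: "prob_space P" unfolding P_def' using M \<Phi>m by (simp add: prob_space.prob_space_distr)
  have sP: "sets P = sets \<Omega>" unfolding P_def' by simp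
  have spP: "space P = space \<Omega>" unfolding P_def' by simp
  have Tm\<Omega>: "seq_shift \<in> \<Omega> \<rightarrow>\<^sub>M \<Omega>" unfolding \<Omega>_def seq_shift_def
    by (rule measurable_PiM_single') (auto simp: space_PiM)
  have Tm: "seq_shift \<in> P \<rightarrow>\<^sub>M P" using Tm\<Omega> measurable_cong_sets[OF sP sP] by simp
  have "distr P \<Omega> seq_shift = P" using se unfolding stationary_ergodic_def P_def \<Omega>_def by auto
  moreover have "distr P P seq_shift = distr P \<Omega> seq_shift" by (rule distr_cong) (auto simp: sP)
  ultimately have Tp: "distr P P seq_shift = P" by simp
  have erg: "\<forall>B\<in>sets P. seq_shift -` B \<inter> space P = B \<longrightarrow> measure P B = 0 \<or> measure P B = 1"
    using se unfolding stationary_ergodic_def P_def[symmetric] \<Omega>_def[symmetric] sP spP by auto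
  define F' where "F' s = F (s 0)" for s :: "nat \<Rightarrow> 'b"
  have F'm: "F' \<in> borel_measurable \<Omega>" unfolding F'_def \<Omega>_def using Fm by measurable
  have F'\<Phi>: "F' (\<Phi> \<omega>) = F (Z 1 \<omega>)" for \<omega> by (simp add: F'_def \<Phi>_def)
  have F'i: "integrable P F'" unfolding P_def'
    using integrable_distr_eq[OF \<Phi>m F'm] Fi by (simp add: F'\<Phi>)
  have intF: "integral\<^sup>L P F' = (\<integral>\<omega>. F (Z 1 \<omega>) \<partial>M)"
    unfolding P_def' using integral_distr[OF \<Phi>m F'm] by (simp add: F'\<Phi>)
  have "AE s in P. (\<lambda>n. (\<Sum>j<n. F' ((seq_shift^^j) s)) / real n) \<longlonglongrightarrow> integral\<^sup>L P F'"
    by (rule prob_space.birkhoff[OF Pp Tm Tp erg F'i])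
  then have "AE \<omega> in M. (\<lambda>n. (\<Sum>j<n. F' ((seq_shift^^j) (\<Phi> \<omega>))) / real n) \<longlonglongrightarrow> integral\<^sup>L P F'"
    unfolding P_def' by (rule AE_distrD[OF \<Phi>m])
  then show ?thesis
  proof (rule AE_mp, intro AE_I2 impI)
    fix \<omega> assume "(\<lambda>n. (\<Sum>j<n. F' ((seq_shift^^j) (\<Phi> \<omega>))) / real n) \<longlonglongrightarrow> integral\<^sup>L P F'"
    moreover have "(\<Sum>j<n. F' ((seq_shift^^j) (\<Phi> \<omega>))) = (\<Sum>j\<in>{1..n}. F (Z j \<omega>))" for n
      by (simp add: shift_iter F'_def \<Phi>_def sum.atLeast1_atMost_eq)
    ultimately show "(\<lambda>n. (\<Sum>j\<in>{1..n}. F (Z j \<omega>)) / real n) \<longlonglongrightarrow> (\<integral>\<omega>. F (Z 1 \<omega>) \<partial>M)"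
      by (simp add: intF)
  qed
qed

lemma stat_transfer:
  fixes Z :: "nat \<Rightarrow> 'o \<Rightarrow> 'b::topological_space"
  assumes M: "prob_space M" and se: "stationary_ergodic M Z"
    and Q: "{b. Q b} \<in> sets borel" and ae: "AE \<omega> in M. Q (Z 1 \<omega>)"
  shows "AE \<omega> in M. \<forall>j\<ge>1. Q (Z j \<omega>)"
proof -
  define \<Omega> where "\<Omega> = (Pi\<^sub>M UNIV (\<lambda>_. borel) :: (nat \<Rightarrow> 'b) measure)"
  define P where "P = process_law M Z"
  define \<Phi> where "\<Phi> = (\<lambda>\<omega> i. Z (Suc i) \<omega>)"
  have Zm: "Z (Suc i) \<in> borel_measurable M" for i using se unfolding stationary_ergodic_def by auto
  have \<Phi>m: "\<Phi> \<in> M \<rightarrow>\<^sub>M \<Omega>" unfolding \<Phi>_def \<Omega>_def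
    by (rule measurable_PiM_single') (use Zm in \<open>auto simp: measurable_space\<close>)
  have P_def': "P = distr M \<Omega> \<Phi>" unfolding P_def process_law_def \<Omega>_def \<Phi>_def ..
  have Pp: "prob_space P" unfolding P_def' using M \<Phi>m by (simp add: prob_space.prob_space_distr)
  have sP: "sets P = sets \<Omega>" unfolding P_def' by simp
  have spP: "space P = space \<Omega>" unfolding P_def' by simp
  have Tm\<Omega>: "seq_shift \<in> \<Omega> \<rightarrow>\<^sub>M \<Omega>" unfolding \<Omega>_def seq_shift_def
    by (rule measurable_PiM_single') (auto simp: space_PiM)
  have Tm: "seq_shift \<in> P \<rightarrow>\<^sub>M P" using Tm\<Omega> measurable_cong_sets[OF sP sP] by simp
  have "distr P \<Omega> seq_shift = P" using se unfolding stationary_ergodic_def P_def \<Omega>_def by auto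
  moreover have "distr P P seq_shift = distr P \<Omega> seq_shift" by (rule distr_cong) (auto simp: sP)
  ultimately have Tp: "distr P P seq_shift = P" by simp
  have c0: "(\<lambda>s. s 0) \<in> \<Omega> \<rightarrow>\<^sub>M borel" unfolding \<Omega>_def by measurable
  have Qs: "{s \<in> space \<Omega>. Q (s 0)} \<in> sets \<Omega>"
  proof -
    have "{s \<in> space \<Omega>. Q (s 0)} = (\<lambda>s. s 0) -` {b. Q b} \<inter> space \<Omega>" by auto
    then show ?thesis using measurable_sets[OF c0 Q] by simp
  qed
  have ae0: "AE s in P. Q (s 0)"
    unfolding P_def' using AE_distr_iff[OF \<Phi>m Qs] ae by (simp add: \<Phi>_def)
  have "AE s in P. Q (s j)" for j
  proof -
    note mi = prob_space.mp_iter[OF Pp Tm Tp, of j]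
    have eq: "distr P P (seq_shift ^^ j) = P" using mi by blast
    have "AE s in distr P P (seq_shift ^^ j). Q (s 0)" unfolding eq by (rule ae0)
    then have "AE s in P. Q ((seq_shift ^^ j) s 0)" by (rule AE_distrD[OF conjunct1[OF mi]])
    then show ?thesis by (simp add: shift_iter)
  qed
  then have "AE s in P. \<forall>j. Q (s j)" by (simp add: AE_all_countable)
  then have "AE \<omega> in M. \<forall>j. Q (\<Phi> \<omega> j)" unfolding P_def' by (rule AE_distrD[OF \<Phi>m])
  then show ?thesis
  proof (rule AE_mp, intro AE_I2 impI allI)
    fix \<omega> and j :: nat assume "\<forall>j. Q (\<Phi> \<omega> j)" and j: "1 \<le> j"
    then have "Q (\<Phi> \<omega> (j - 1))" by blast
    then show "Q (Z j \<omega>)" using j by (simp add: \<Phi>_def)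
  qed
qed


theorem theorem1:
  fixes M :: "'o measure"
    and X :: "nat \<Rightarrow> 'o \<Rightarrow> 'x::euclidean_space"
    and Y :: "nat \<Rightarrow> 'o \<Rightarrow> real"
    and A :: "nat \<Rightarrow> 'x \<Rightarrow> 'x set"
    and N :: "nat \<Rightarrow> nat"
    and L :: real
  defines "\<mu> \<equiv> distr M borel (X 1)"
  defines "S \<equiv> cell_support \<mu> A"
  assumes "prob_space M"
    and "stationary_ergodic M (\<lambda>i \<omega>. (X i \<omega>, Y i \<omega>))"
    and "integrable M (Y 1)"
    and "nested_cube_partitions A"
    and "L > 0"
    and "mono N" and "\<forall>n. N n \<ge> 1" and "filterlim N at_top sequentially"
  shows
    "(AE \<omega> in M. \<forall>x\<in>S. (\<lambda>n. m_hat X Y A N L n x \<omega>) \<longlonglongrightarrow> m_L M (X 1) (Y 1) A L x)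
     \<and> (bounded S \<longrightarrow>
          (AE \<omega> in M. uniform_limit S (\<lambda>n x. m_hat X Y A N L n x \<omega>) (m_L M (X 1) (Y 1) A L) sequentially))
     \<and> (((\<exists>D. AE \<omega> in M. \<bar>Y 1 \<omega>\<bar> \<le> D) \<or> (\<exists>R. AE x in \<mu>. norm x \<le> R)) \<longrightarrow>
          (AE \<omega> in M. (\<lambda>n. \<integral>\<^sup>+ x. ennreal ((m_hat X Y A N L n x \<omega> - m_L M (X 1) (Y 1) A L x)\<^sup>2) \<partial>\<mu>)
                        \<longlonglongrightarrow> 0))"
  proof -
  note mu_def = assms(1) and S_def = assms(2)
  have M: "prob_space M" by (fact assms(3))
  interpret prob_space M by (fact M)
  note se = assms(4) and Yi = assms(5) and ncp = assms(6) and Lpos = assms(7)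
    and Nge = assms(9) and Nlim = assms(10)
  define Z where "Z = (\<lambda>i \<omega>. (X i \<omega>, Y i \<omega>))"
  have se': "stationary_ergodic M Z" using se unfolding Z_def .
  have fstm[measurable]: "fst \<in> borel_measurable (borel :: ('x \<times> real) measure)"
    by (intro borel_measurable_continuous_onI continuous_intros)
  have sndm[measurable]: "snd \<in> borel_measurable (borel :: ('x \<times> real) measure)"
    by (intro borel_measurable_continuous_onI continuous_intros)
  have Zm: "Z i \<in> borel_measurable M" if "1 \<le> i" for i
    using se' that unfolding stationary_ergodic_def by auto
  have Xm[measurable]: "X 1 \<in> borel_measurable M"
  proof -
    have "(\<lambda>\<omega>. fst (Z 1 \<omega>)) \<in> borel_measurable M" by (rule measurable_compose[OF Zm fstm]) simp
    then show ?thesis by (simp add: Z_def)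
  qed
  have Ym[measurable]: "Y 1 \<in> borel_measurable M"
  proof -
    have "(\<lambda>\<omega>. snd (Z 1 \<omega>)) \<in> borel_measurable M" by (rule measurable_compose[OF Zm sndm]) simp
    then show ?thesis by (simp add: Z_def)
  qed
  have mu_prob: "prob_space \<mu>" unfolding mu_def by (rule prob_space_distr[OF Xm])
  have sets_mu: "sets \<mu> = sets borel" "space \<mu> = UNIV" unfolding mu_def by auto
  have muC: "measure \<mu> C = measure M {\<omega>\<in>space M. X 1 \<omega> \<in> C}" if C: "C \<in> sets borel" for C
  proof -
    have "measure \<mu> C = measure M (X 1 -` C \<inter> space M)" unfolding mu_def by (rule measure_distr[OF Xm C])
    also have "X 1 -` C \<inter> space M = {\<omega>\<in>space M. X 1 \<omega> \<in> C}" by auto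
    finally show ?thesis .
  qed
  obtain D where D: "countable D" "\<And>k x. 1 \<le> k \<Longrightarrow> \<exists>d\<in>D. A k d = A k x"
    using ncp_dense[OF ncp] by blast
  have emp_eq: "emp_cell_mean X Y A k n d \<omega> = emp_cell_mean X Y A k n x \<omega>" if "A k d = A k x" for k d x n \<omega>
    using that by (simp add: emp_cell_mean_def Let_def)
  have cm_eq: "cell_mean M (X 1) (Y 1) A k d = cell_mean M (X 1) (Y 1) A k x" if "A k d = A k x" for k d x
    using that by (simp add: cell_mean_def)
  have cellconv: "AE \<omega> in M. (\<lambda>n. emp_cell_mean X Y A k n d \<omega>) \<longlonglongrightarrow> cell_mean M (X 1) (Y 1) A k d"
    if k: "1 \<le> k" and pos: "0 < measure \<mu> (A k d)" for k d
  proof -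
    define C where "C = A k d"
    have Cb[measurable]: "C \<in> sets borel" using ncp_borel[OF ncp k] unfolding C_def .
    define F1 where "F1 p = snd p * indicator C (fst p)" for p :: "'x \<times> real"
    define F2 where "F2 p = (indicator C (fst p) :: real)" for p :: "'x \<times> real"
    have F1m: "F1 \<in> borel_measurable borel" unfolding F1_def by measurable
    have F2m: "F2 \<in> borel_measurable borel" unfolding F2_def by measurable
    have F1i: "integrable M (\<lambda>\<omega>. F1 (Z 1 \<omega>))"
    proof (rule Bochner_Integration.integrable_bound[OF Yi])
      show "(\<lambda>\<omega>. F1 (Z 1 \<omega>)) \<in> borel_measurable M" unfolding F1_def Z_def by measurable
      show "AE \<omega> in M. norm (F1 (Z 1 \<omega>)) \<le> norm (Y 1 \<omega>)"
        by (auto simp: F1_def Z_def indicator_def)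
    qed
    have F2i: "integrable M (\<lambda>\<omega>. F2 (Z 1 \<omega>))"
    proof (rule integrable_const_bound[where B=1])
      show "(\<lambda>\<omega>. F2 (Z 1 \<omega>)) \<in> borel_measurable M" unfolding F2_def Z_def by measurable
    qed (auto simp: F2_def indicator_def)
    note L1 = erg_lln[OF M se' F1m F1i] and L2 = erg_lln[OF M se' F2m F2i]
    have i1: "(\<integral>\<omega>. F1 (Z 1 \<omega>) \<partial>M) = (\<integral>\<omega>. indicator C (X 1 \<omega>) * Y 1 \<omega> \<partial>M)"
      by (simp add: F1_def Z_def mult.commute)
    have i2: "(\<integral>\<omega>. F2 (Z 1 \<omega>) \<partial>M) = measure M {\<omega>\<in>space M. X 1 \<omega> \<in> C}"
    proof -
      have "(\<integral>\<omega>. F2 (Z 1 \<omega>) \<partial>M) = (\<integral>\<omega>. indicator {\<omega>\<in>space M. X 1 \<omega> \<in> C} \<omega> \<partial>M)"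
        by (rule Bochner_Integration.integral_cong) (auto simp: F2_def Z_def indicator_def)
      also have "\<dots> = measure M {\<omega>\<in>space M. X 1 \<omega> \<in> C}"
        by (simp add: Int_absorb2 subset_iff)
      finally show ?thesis .
    qed
    have p: "0 < measure M {\<omega>\<in>space M. X 1 \<omega> \<in> C}" using pos muC[OF Cb] unfolding C_def by simp
    show ?thesis using L1 L2
    proof (rule AE_mp[OF AE_conjI], intro AE_I2 impI)
      fix \<omega> assume H: "(\<lambda>n. (\<Sum>j = 1..n. F1 (Z j \<omega>)) / real n) \<longlonglongrightarrow> (\<integral>\<omega>. F1 (Z 1 \<omega>) \<partial>M) \<and>
                  (\<lambda>n. (\<Sum>j = 1..n. F2 (Z j \<omega>)) / real n) \<longlonglongrightarrow> (\<integral>\<omega>. F2 (Z 1 \<omega>) \<partial>M)"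
      have e1: "F1 (Z j \<omega>) = Y j \<omega> * indicator C (X j \<omega>)" for j by (simp add: F1_def Z_def)
      have e2: "F2 (Z j \<omega>) = indicator C (X j \<omega>)" for j by (simp add: F2_def Z_def)
      have H1: "(\<lambda>n. (\<Sum>j = 1..n. Y j \<omega> * indicator C (X j \<omega>)) / real n) \<longlonglongrightarrow> (\<integral>\<omega>. indicator C (X 1 \<omega>) * Y 1 \<omega> \<partial>M)"
        using H unfolding e1 i1 by blast
      have H2: "(\<lambda>n. (\<Sum>j = 1..n. indicator C (X j \<omega>)) / real n) \<longlonglongrightarrow> measure M {\<omega>\<in>space M. X 1 \<omega> \<in> C}"
        using H unfolding e2 i2 by blast
      have "(\<lambda>n. if (\<Sum>j = 1..n. indicator C (X j \<omega>) :: real) = 0 then 0 else (\<Sum>j = 1..n. Y j \<omega> * indicator C (X j \<omega>)) / (\<Sum>j = 1..n. indicator C (X j \<omega>)))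
          \<longlonglongrightarrow> (\<integral>\<omega>. indicator C (X 1 \<omega>) * Y 1 \<omega> \<partial>M) / measure M {\<omega>\<in>space M. X 1 \<omega> \<in> C}"
        by (rule ratio_lim[OF H1 H2 p])
      then show "(\<lambda>n. emp_cell_mean X Y A k n d \<omega>) \<longlonglongrightarrow> cell_mean M (X 1) (Y 1) A k d"
        unfolding emp_cell_mean_def cell_mean_def Let_def C_def[symmetric] .
    qed
  qed
  define G where "G \<omega> \<longleftrightarrow> (\<forall>k. \<forall>d\<in>D. 1 \<le> k \<and> 0 < measure \<mu> (A k d) \<longrightarrow>
      (\<lambda>n. emp_cell_mean X Y A k n d \<omega>) \<longlonglongrightarrow> cell_mean M (X 1) (Y 1) A k d)" for \<omega>
  have AEk: "AE \<omega> in M. \<forall>d\<in>D. 1 \<le> k \<and> 0 < measure \<mu> (A k d) \<longrightarrow>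
      (\<lambda>n. emp_cell_mean X Y A k n d \<omega>) \<longlonglongrightarrow> cell_mean M (X 1) (Y 1) A k d" for k
  proof (subst AE_ball_countable[OF D(1)], intro ballI)
    fix d assume "d \<in> D"
    show "AE \<omega> in M. 1 \<le> k \<and> 0 < measure \<mu> (A k d) \<longrightarrow>
      (\<lambda>n. emp_cell_mean X Y A k n d \<omega>) \<longlonglongrightarrow> cell_mean M (X 1) (Y 1) A k d"
    proof (cases "1 \<le> k \<and> 0 < measure \<mu> (A k d)")
      case True
      have "AE \<omega> in M. (\<lambda>n. emp_cell_mean X Y A k n d \<omega>) \<longlonglongrightarrow> cell_mean M (X 1) (Y 1) A k d"
        using cellconv[of k d] True by blast
      then show ?thesis by (rule AE_mp) (intro AE_I2 impI, blast)
    next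
      case False
      show ?thesis by (rule AE_I2) (use False in blast)
    qed
  qed
  have AEG: "AE \<omega> in M. G \<omega>" unfolding G_def by (subst AE_all_countable) (rule allI, rule AEk)
  have Sdesc: "\<exists>d\<in>D. A k d = A k x \<and> 0 < measure \<mu> (A k d)" if x: "x \<in> S" and k: "1 \<le> k" for x k
  proof -
    obtain d where "d \<in> D" "A k d = A k x" using D(2)[OF k] by blast
    moreover have "0 < measure \<mu> (A k x)" using x k unfolding S_def cell_support_def by auto
    ultimately show ?thesis by auto
  qed
  have lvl: "uniform_limit T (\<lambda>n x. emp_cell_mean X Y A k n x \<omega>) (\<lambda>x. cell_mean M (X 1) (Y 1) A k x) sequentially"
    if G: "G \<omega>" and bT: "bounded T" and TS: "T \<subseteq> S" and k: "1 \<le> k" for \<omega> T k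
  proof -
    define rep where "rep C = (SOME d. d \<in> D \<and> A k d = C \<and> 0 < measure \<mu> (A k d))" for C
    have rep: "rep (A k x) \<in> D \<and> A k (rep (A k x)) = A k x \<and> 0 < measure \<mu> (A k (rep (A k x)))"
      if x: "x \<in> T" for x
      unfolding rep_def by (rule someI_ex) (use Sdesc[of x k] x TS k in auto)
    define R where "R = rep ` ((\<lambda>x. A k x) ` T)"
    have Rfin: "finite R" using ncp_finite[OF ncp bT k] unfolding R_def by simp
    have conv: "\<forall>d\<in>R. (\<lambda>n. emp_cell_mean X Y A k n d \<omega>) \<longlonglongrightarrow> cell_mean M (X 1) (Y 1) A k d"
      using G rep k unfolding R_def G_def by auto
    show ?thesis unfolding uniform_limit_iff
    proof (intro allI impI)
      fix e :: real assume e: "0 < e"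
      have "eventually (\<lambda>n. \<forall>d\<in>R. dist (emp_cell_mean X Y A k n d \<omega>) (cell_mean M (X 1) (Y 1) A k d) < e) sequentially"
        using conv e by (intro eventually_ball_finite[OF Rfin]) (auto simp: tendsto_iff)
      then show "eventually (\<lambda>n. \<forall>x\<in>T. dist (emp_cell_mean X Y A k n x \<omega>) (cell_mean M (X 1) (Y 1) A k x) < e) sequentially"
      proof eventually_elim
        case (elim n)
        show ?case
        proof
          fix x assume x: "x \<in> T"
          have dR: "rep (A k x) \<in> R" unfolding R_def using x by auto
          have "A k (rep (A k x)) = A k x" using rep[OF x] by blast
          then show "dist (emp_cell_mean X Y A k n x \<omega>) (cell_mean M (X 1) (Y 1) A k x) < e"
            using elim dR emp_eq[of k "rep (A k x)" x] cm_eq[of k "rep (A k x)" x] by metis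
        qed
      qed
    qed
  qed
  define c where "c j = L / 2 ^ (j + 2)" for j :: nat
  have c_sum: "summable c" unfolding c_def by (rule summable_c)
  have c_nn: "0 \<le> c j" for j unfolding c_def using Lpos by simp
  have Klim: "filterlim (\<lambda>n. N n - 1) at_top sequentially"
    unfolding filterlim_at_top
  proof (intro allI)
    fix z :: nat
    have "eventually (\<lambda>n. z + 1 \<le> N n) sequentially" using Nlim by (simp add: filterlim_at_top)
    then show "eventually (\<lambda>n. z \<le> N n - 1) sequentially" by eventually_elim auto
  qed
  have mh_eq: "m_hat X Y A N L n x \<omega> = emp_cell_mean X Y A 1 n x \<omega> +
      (\<Sum>j<N n - 1. clip (c j) (emp_cell_mean X Y A (j+2) n x \<omega> - emp_cell_mean X Y A (j+1) n x \<omega>))" for n x \<omega>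
    unfolding m_hat_def sum_2_reindex c_def by simp
  have mL_eq: "m_L M (X 1) (Y 1) A L = (\<lambda>x. cell_mean M (X 1) (Y 1) A 1 x +
      (\<Sum>j. clip (c j) (cell_mean M (X 1) (Y 1) A (j+2) x - cell_mean M (X 1) (Y 1) A (j+1) x)))"
    by (rule ext) (simp add: m_L_def c_def)
  have det: "uniform_limit T (\<lambda>n x. m_hat X Y A N L n x \<omega>) (m_L M (X 1) (Y 1) A L) sequentially"
    if G: "G \<omega>" and bT: "bounded T" and TS: "T \<subseteq> S" for \<omega> T
  proof -
    have ul: "uniform_limit T (\<lambda>n x. clip (c j) (emp_cell_mean X Y A (j+2) n x \<omega> - emp_cell_mean X Y A (j+1) n x \<omega>))
        (\<lambda>x. clip (c j) (cell_mean M (X 1) (Y 1) A (j+2) x - cell_mean M (X 1) (Y 1) A (j+1) x)) sequentially" for j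
    proof -
      have k2: "1 \<le> j+2" and k1: "1 \<le> j+1" by simp_all
      note l2 = lvl[OF G bT TS k2] and l1 = lvl[OF G bT TS k1]
      show ?thesis unfolding uniform_limit_iff
      proof (intro allI impI)
        fix e :: real assume e: "0 < e"
        have e2: "0 < e/2" using e by simp
        have "eventually (\<lambda>n. \<forall>x\<in>T. dist (emp_cell_mean X Y A (j+2) n x \<omega>) (cell_mean M (X 1) (Y 1) A (j+2) x) < e/2) sequentially"
          using l2 e2 unfolding uniform_limit_iff by blast
        moreover have "eventually (\<lambda>n. \<forall>x\<in>T. dist (emp_cell_mean X Y A (j+1) n x \<omega>) (cell_mean M (X 1) (Y 1) A (j+1) x) < e/2) sequentially"
          using l1 e2 unfolding uniform_limit_iff by blast
        ultimately show "eventually (\<lambda>n. \<forall>x\<in>T. dist (clip (c j) (emp_cell_mean X Y A (j+2) n x \<omega> - emp_cell_mean X Y A (j+1) n x \<omega>))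
            (clip (c j) (cell_mean M (X 1) (Y 1) A (j+2) x - cell_mean M (X 1) (Y 1) A (j+1) x)) < e) sequentially"
        proof eventually_elim
          case (elim n)
          show ?case
          proof
            fix x assume x: "x \<in> T"
            define a where "a = emp_cell_mean X Y A (j+2) n x \<omega>"
            define b where "b = emp_cell_mean X Y A (j+1) n x \<omega>"
            define a' where "a' = cell_mean M (X 1) (Y 1) A (j+2) x"
            define b' where "b' = cell_mean M (X 1) (Y 1) A (j+1) x"
            have "\<bar>a - a'\<bar> < e/2" "\<bar>b - b'\<bar> < e/2"
              using elim x unfolding a_def a'_def b_def b'_def dist_real_def by auto
            moreover have "\<bar>clip (c j) (a - b) - clip (c j) (a' - b')\<bar> \<le> \<bar>(a - b) - (a' - b')\<bar>"
              by (rule clip_lip[OF c_nn])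
            ultimately have "\<bar>clip (c j) (a - b) - clip (c j) (a' - b')\<bar> < e" by linarith
            then show "dist (clip (c j) (emp_cell_mean X Y A (j+2) n x \<omega> - emp_cell_mean X Y A (j+1) n x \<omega>))
              (clip (c j) (cell_mean M (X 1) (Y 1) A (j+2) x - cell_mean M (X 1) (Y 1) A (j+1) x)) < e"
              unfolding a_def a'_def b_def b'_def dist_real_def .
          qed
        qed
      qed
    qed
    have su: "uniform_limit T (\<lambda>n x. \<Sum>j<N n - 1. clip (c j) (emp_cell_mean X Y A (j+2) n x \<omega> - emp_cell_mean X Y A (j+1) n x \<omega>))
        (\<lambda>x. \<Sum>j. clip (c j) (cell_mean M (X 1) (Y 1) A (j+2) x - cell_mean M (X 1) (Y 1) A (j+1) x)) sequentially"
      by (rule series_unif[where u="\<lambda>n j x. clip (c j) (emp_cell_mean X Y A (j+2) n x \<omega> - emp_cell_mean X Y A (j+1) n x \<omega>)"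
            and v="\<lambda>j x. clip (c j) (cell_mean M (X 1) (Y 1) A (j+2) x - cell_mean M (X 1) (Y 1) A (j+1) x)",
            OF c_sum c_nn _ _ ul Klim]) (auto intro: clip_bound[OF c_nn])
    have "uniform_limit T (\<lambda>n x. emp_cell_mean X Y A 1 n x \<omega> +
      (\<Sum>j<N n - 1. clip (c j) (emp_cell_mean X Y A (j+2) n x \<omega> - emp_cell_mean X Y A (j+1) n x \<omega>)))
      (\<lambda>x. cell_mean M (X 1) (Y 1) A 1 x +
      (\<Sum>j. clip (c j) (cell_mean M (X 1) (Y 1) A (j+2) x - cell_mean M (X 1) (Y 1) A (j+1) x))) sequentially"
      by (rule uniform_limit_add[OF lvl[OF G bT TS order_refl] su])
    then show ?thesis unfolding mh_eq mL_eq .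
  qed
  have ptw: "(\<lambda>n. m_hat X Y A N L n x \<omega>) \<longlonglongrightarrow> m_L M (X 1) (Y 1) A L x" if "G \<omega>" "x \<in> S" for \<omega> x
  proof -
    have "uniform_limit {x} (\<lambda>n x. m_hat X Y A N L n x \<omega>) (m_L M (X 1) (Y 1) A L) sequentially"
      using that by (intro det) auto
    then show ?thesis by (rule tendsto_uniform_limitI) simp
  qed
  have partA: "AE \<omega> in M. \<forall>x\<in>S. (\<lambda>n. m_hat X Y A N L n x \<omega>) \<longlonglongrightarrow> m_L M (X 1) (Y 1) A L x"
    using AEG by (rule AE_mp) (intro AE_I2 impI ballI ptw)
  have partB: "bounded S \<longrightarrow>
      (AE \<omega> in M. uniform_limit S (\<lambda>n x. m_hat X Y A N L n x \<omega>) (m_L M (X 1) (Y 1) A L) sequentially)"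
  proof
    assume bS: "bounded S"
    show "AE \<omega> in M. uniform_limit S (\<lambda>n x. m_hat X Y A N L n x \<omega>) (m_L M (X 1) (Y 1) A L) sequentially"
      using AEG by (rule AE_mp) (intro AE_I2 impI det[OF _ bS], auto)
  qed
  interpret mu: prob_space \<mu> by (rule mu_prob)
  have AES: "AE x in \<mu>. x \<in> S"
  proof -
    have nul: "AE x in \<mu>. 1 \<le> k \<and> measure \<mu> (A k d) = 0 \<longrightarrow> x \<notin> A k d" for k d
    proof (cases "1 \<le> k \<and> measure \<mu> (A k d) = 0")
      case True
      then have "A k d \<in> null_sets \<mu>" using ncp_borel[OF ncp, of k d] sets_mu mu.emeasure_eq_measure
        by (auto simp: null_sets_def)
      then have "AE x in \<mu>. x \<notin> A k d" by (rule AE_not_in)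
      then show ?thesis by (rule AE_mp) (intro AE_I2 impI, blast)
    next
      case False
      show ?thesis by (rule AE_I2) (use False in blast)
    qed
    have "AE x in \<mu>. \<forall>k. \<forall>d\<in>D. 1 \<le> k \<and> measure \<mu> (A k d) = 0 \<longrightarrow> x \<notin> A k d"
      by (subst AE_all_countable, intro allI, subst AE_ball_countable[OF D(1)], intro ballI, rule nul)
    then show ?thesis
    proof (rule AE_mp, intro AE_I2 impI)
      fix x assume H: "\<forall>k. \<forall>d\<in>D. 1 \<le> k \<and> measure \<mu> (A k d) = 0 \<longrightarrow> x \<notin> A k d"
      show "x \<in> S" unfolding S_def cell_support_def
      proof (intro CollectI allI impI)
        fix k :: nat assume k: "1 \<le> k"
        obtain d where d: "d \<in> D" "A k d = A k x" using D(2)[OF k] by blast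
        have "x \<in> A k d" using ncp_mem[OF ncp k] d by simp
        then have "measure \<mu> (A k x) \<noteq> 0" using H d k by metis
        then show "0 < measure \<mu> (A k x)" using measure_nonneg[of \<mu> "A k x"] by linarith
      qed
    qed
  qed
  have sq_le: "(a - b)\<^sup>2 \<le> e" if "\<bar>a - b\<bar> < sqrt e" "0 < e" for a b e :: real
  proof -
    have "(a - b)\<^sup>2 = \<bar>a - b\<bar>\<^sup>2" by simp
    also have "\<dots> \<le> (sqrt e)\<^sup>2" using that by (intro power_mono) auto
    also have "\<dots> = e" using that by simp
    finally show ?thesis .
  qed
  have partCii: "AE \<omega> in M. (\<lambda>n. \<integral>\<^sup>+ x. ennreal ((m_hat X Y A N L n x \<omega> - m_L M (X 1) (Y 1) A L x)\<^sup>2) \<partial>\<mu>) \<longlonglongrightarrow> 0"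
    if bS: "bounded S"
    using AEG
  proof (rule AE_mp, intro AE_I2 impI)
    fix \<omega> assume G: "G \<omega>"
    note U = det[OF G bS order_refl]
    show "(\<lambda>n. \<integral>\<^sup>+ x. ennreal ((m_hat X Y A N L n x \<omega> - m_L M (X 1) (Y 1) A L x)\<^sup>2) \<partial>\<mu>) \<longlonglongrightarrow> 0"
    proof (rule ennreal_tendsto0)
      fix e :: real assume e: "0 < e"
      have "eventually (\<lambda>n. \<forall>x\<in>S. dist (m_hat X Y A N L n x \<omega>) (m_L M (X 1) (Y 1) A L x) < sqrt e) sequentially"
        using U e unfolding uniform_limit_iff by simp
      then show "eventually (\<lambda>n. (\<integral>\<^sup>+ x. ennreal ((m_hat X Y A N L n x \<omega> - m_L M (X 1) (Y 1) A L x)\<^sup>2) \<partial>\<mu>) \<le> ennreal e) sequentially"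
      proof eventually_elim
        case (elim n)
        have "(\<integral>\<^sup>+ x. ennreal ((m_hat X Y A N L n x \<omega> - m_L M (X 1) (Y 1) A L x)\<^sup>2) \<partial>\<mu>) \<le> (\<integral>\<^sup>+ x. ennreal e \<partial>\<mu>)"
        proof (rule nn_integral_mono_AE)
          show "AE x in \<mu>. ennreal ((m_hat X Y A N L n x \<omega> - m_L M (X 1) (Y 1) A L x)\<^sup>2) \<le> ennreal e"
            using AES
          proof (rule AE_mp, intro AE_I2 impI)
            fix x assume "x \<in> S"
            then show "ennreal ((m_hat X Y A N L n x \<omega> - m_L M (X 1) (Y 1) A L x)\<^sup>2) \<le> ennreal e"
              using elim e by (intro ennreal_leI sq_le) (auto simp: dist_real_def)
          qed
        qed
        also have "\<dots> = ennreal e" using mu.emeasure_space_1 by simp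
        finally show ?case .
      qed
    qed
  qed
  have bS_of: "bounded S" if HR: "AE x in \<mu>. norm x \<le> R0" for R0
  proof -
    define B where "B = {y::'x. R0 < norm y}"
    have Bs: "B \<in> sets borel"
    proof -
      have "{y \<in> space borel. R0 < norm y} \<in> sets (borel :: 'x measure)" by measurable
      then show ?thesis unfolding B_def by simp
    qed
    have "{x\<in>space \<mu>. \<not> norm x \<le> R0} = B" unfolding B_def sets_mu by auto
    then have "B \<in> null_sets \<mu>" using AE_iff_null[of \<mu> "\<lambda>x. norm x \<le> R0"] HR Bs sets_mu by auto
    then have nul: "measure \<mu> B = 0" by (simp add: measure_def null_setsD1)
    have "norm x \<le> R0 + DIM('x) / 2 ^ 3" if x: "x \<in> S" for x
    proof -
      have pos: "0 < measure \<mu> (A 1 x)" using x unfolding S_def cell_support_def by auto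
      have "\<exists>y\<in>A 1 x. norm y \<le> R0"
      proof (rule ccontr)
        assume "\<not> ?thesis"
        then have "A 1 x \<subseteq> B" unfolding B_def by auto
        then have "measure \<mu> (A 1 x) \<le> measure \<mu> B" using Bs sets_mu by (intro mu.finite_measure_mono) auto
        then show False using pos nul by simp
      qed
      then obtain y where y: "y \<in> A 1 x" "norm y \<le> R0" by blast
      have "norm (y - x) \<le> DIM('x) / 2 ^ (1 + 2)" by (rule ncp_diam[OF ncp order_refl y(1)])
      moreover have "norm x \<le> norm y + norm (y - x)" using norm_triangle_ineq4[of y "y - x"] by simp
      ultimately show ?thesis using y(2) by simp
    qed
    then show ?thesis unfolding bounded_iff by blast
  qed
  have partCi: "AE \<omega> in M. (\<lambda>n. \<integral>\<^sup>+ x. ennreal ((m_hat X Y A N L n x \<omega> - m_L M (X 1) (Y 1) A L x)\<^sup>2) \<partial>\<mu>) \<longlonglongrightarrow> 0"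
    if HD: "AE \<omega> in M. \<bar>Y 1 \<omega>\<bar> \<le> D0" for D0
  proof -
    define D' where "D' = max D0 0"
    have D'0: "0 \<le> D'" unfolding D'_def by simp
    have Qs: "{b :: 'x \<times> real. \<bar>snd b\<bar> \<le> D'} \<in> sets borel"
    proof -
      have "{b \<in> space borel. \<bar>snd b\<bar> \<le> D'} \<in> sets (borel :: ('x \<times> real) measure)" by measurable
      then show ?thesis by simp
    qed
    have "AE \<omega> in M. \<bar>snd (Z 1 \<omega>)\<bar> \<le> D'" using HD by (rule AE_mp) (intro AE_I2 impI, auto simp: Z_def D'_def)
    from stat_transfer[OF M se' Qs this] have AEY: "AE \<omega> in M. \<forall>j\<ge>1. \<bar>Y j \<omega>\<bar> \<le> D'" by (simp add: Z_def)
    have empb: "\<bar>emp_cell_mean X Y A k n x \<omega>\<bar> \<le> D'" if HY: "\<forall>j\<ge>1. \<bar>Y j \<omega>\<bar> \<le> D'" for k n x \<omega>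
    proof -
      define den where "den = (\<Sum>j\<in>{1..n}. indicator (A k x) (X j \<omega>) :: real)"
      define num where "num = (\<Sum>j\<in>{1..n}. Y j \<omega> * indicator (A k x) (X j \<omega>))"
      have nb: "\<bar>num\<bar> \<le> D' * den"
        unfolding num_def den_def sum_distrib_left
        by (rule order_trans[OF sum_abs sum_mono]) (use HY in \<open>auto simp: indicator_def abs_mult\<close>)
      have den0: "0 \<le> den" unfolding den_def by (intro sum_nonneg) auto
      show ?thesis
      proof (cases "den = 0")
        case True then show ?thesis unfolding emp_cell_mean_def Let_def den_def[symmetric] using D'0 by simp
      next
        case False
        then have dp: "0 < den" using den0 by simp
        have "\<bar>num / den\<bar> = \<bar>num\<bar> / den" using dp by simp
        also have "\<dots> \<le> D'" using nb dp by (simp add: pos_divide_le_eq)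
        finally show ?thesis unfolding emp_cell_mean_def Let_def den_def[symmetric] num_def[symmetric] using False by simp
      qed
    qed
    have sc0: "0 \<le> suminf c" by (rule suminf_nonneg[OF c_sum c_nn])
    define W where "W = 2 * (D' + suminf c)"
    have W0: "0 \<le> W" using D'0 sc0 unfolding W_def by simp
    have mhb: "\<bar>m_hat X Y A N L n x \<omega>\<bar> \<le> D' + suminf c" if HY: "\<forall>j\<ge>1. \<bar>Y j \<omega>\<bar> \<le> D'" for n x \<omega>
    proof -
      define s where "s = (\<Sum>j<N n - 1. clip (c j) (emp_cell_mean X Y A (j+2) n x \<omega> - emp_cell_mean X Y A (j+1) n x \<omega>))"
      have "\<bar>s\<bar> \<le> (\<Sum>j<N n - 1. c j)" unfolding s_def
        by (rule order_trans[OF sum_abs sum_mono]) (rule clip_bound[OF c_nn])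
      also have "\<dots> \<le> suminf c" by (rule sum_le_suminf[OF c_sum]) (auto intro: c_nn)
      finally have "\<bar>s\<bar> \<le> suminf c" .
      moreover have "\<bar>emp_cell_mean X Y A 1 n x \<omega>\<bar> \<le> D'" by (rule empb[OF HY])
      moreover have "\<bar>emp_cell_mean X Y A 1 n x \<omega> + s\<bar> \<le> \<bar>emp_cell_mean X Y A 1 n x \<omega>\<bar> + \<bar>s\<bar>" by (rule abs_triangle_ineq)
      ultimately show ?thesis unfolding mh_eq s_def[symmetric] by linarith
    qed
    have mLb: "\<bar>m_L M (X 1) (Y 1) A L x\<bar> \<le> D' + suminf c" if G: "G \<omega>" and HY: "\<forall>j\<ge>1. \<bar>Y j \<omega>\<bar> \<le> D'" and xS: "x \<in> S" for \<omega> x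
    proof -
      have "(\<lambda>n. \<bar>m_hat X Y A N L n x \<omega>\<bar>) \<longlonglongrightarrow> \<bar>m_L M (X 1) (Y 1) A L x\<bar>" using ptw[OF G xS] by (rule tendsto_rabs)
      then show ?thesis by (rule LIMSEQ_le_const2) (use mhb[OF HY] in auto)
    qed
    define B where "B n = {y :: 'x. real n < norm y}" for n :: nat
    have Bm: "B n \<in> sets \<mu>" for n
    proof -
      have "{y \<in> space borel. real n < norm y} \<in> sets (borel :: 'x measure)" by measurable
      then show ?thesis unfolding B_def sets_mu by simp
    qed
    have Blim: "(\<lambda>n. measure \<mu> (B n)) \<longlonglongrightarrow> 0"
    proof -
      have "(\<lambda>n. measure \<mu> (B n)) \<longlonglongrightarrow> measure \<mu> (\<Inter>i. B i)"
      proof (rule mu.finite_Lim_measure_decseq)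
        show "range B \<subseteq> sets \<mu>" using Bm by auto
        show "decseq B" by (auto simp: decseq_def B_def)
      qed
      moreover have "(\<Inter>i. B i) = {}"
      proof -
        have "y \<notin> (\<Inter>i. B i)" for y
        proof -
          obtain n :: nat where "norm y < real n" using reals_Archimedean2 by blast
          then have "y \<notin> B n" by (simp add: B_def)
          then show ?thesis by blast
        qed
        then show ?thesis by blast
      qed
      ultimately show ?thesis by simp
    qed
    show ?thesis using AEG AEY
    proof (rule AE_mp[OF AE_conjI], intro AE_I2 impI)
      fix \<omega> assume H: "G \<omega> \<and> (\<forall>j\<ge>1. \<bar>Y j \<omega>\<bar> \<le> D')"
      then have G: "G \<omega>" and HY: "\<forall>j\<ge>1. \<bar>Y j \<omega>\<bar> \<le> D'" by auto
      have db: "\<bar>m_hat X Y A N L n x \<omega> - m_L M (X 1) (Y 1) A L x\<bar> \<le> W" if xS: "x \<in> S" for n x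
      proof -
        have aux: "\<And>p q K :: real. \<bar>p - q\<bar> \<le> \<bar>p\<bar> + \<bar>q\<bar> \<Longrightarrow> \<bar>p\<bar> \<le> K \<Longrightarrow> \<bar>q\<bar> \<le> K \<Longrightarrow> \<bar>p - q\<bar> \<le> 2 * K"
          by linarith
        show ?thesis unfolding W_def
          by (rule aux[OF abs_triangle_ineq4 mhb[OF HY, of n x] mLb[OF G HY xS]])
      qed
      show "(\<lambda>n. \<integral>\<^sup>+ x. ennreal ((m_hat X Y A N L n x \<omega> - m_L M (X 1) (Y 1) A L x)\<^sup>2) \<partial>\<mu>) \<longlonglongrightarrow> 0"
      proof (rule ennreal_tendsto0)
        fix e :: real assume e: "0 < e"
        define e' where "e' = e / (2 * (W\<^sup>2 + 1))"
        have W1: "0 < W\<^sup>2 + 1" by (simp add: add_nonneg_pos)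
        have e'0: "0 < e'" unfolding e'_def using e W1 by simp
        obtain R where R: "measure \<mu> (B R) < e'"
          using order_tendstoD(2)[OF Blim e'0] by (auto simp: eventually_sequentially)
        define T where "T = S \<inter> cball 0 (real R)"
        have bT: "bounded T" unfolding T_def by (intro bounded_Int) auto
        have TS: "T \<subseteq> S" unfolding T_def by auto
        have e2: "0 < e/2" using e by simp
        have "eventually (\<lambda>n. \<forall>x\<in>T. dist (m_hat X Y A N L n x \<omega>) (m_L M (X 1) (Y 1) A L x) < sqrt (e/2)) sequentially"
          using det[OF G bT TS] e2 unfolding uniform_limit_iff by simp
        then show "eventually (\<lambda>n. (\<integral>\<^sup>+ x. ennreal ((m_hat X Y A N L n x \<omega> - m_L M (X 1) (Y 1) A L x)\<^sup>2) \<partial>\<mu>) \<le> ennreal e) sequentially"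
        proof eventually_elim
          case (elim n)
          have "(\<integral>\<^sup>+ x. ennreal ((m_hat X Y A N L n x \<omega> - m_L M (X 1) (Y 1) A L x)\<^sup>2) \<partial>\<mu>)
              \<le> (\<integral>\<^sup>+ x. ennreal (e/2) + ennreal (W\<^sup>2) * indicator (B R) x \<partial>\<mu>)"
          proof (rule nn_integral_mono_AE)
            show "AE x in \<mu>. ennreal ((m_hat X Y A N L n x \<omega> - m_L M (X 1) (Y 1) A L x)\<^sup>2) \<le> ennreal (e/2) + ennreal (W\<^sup>2) * indicator (B R) x"
              using AES
            proof (rule AE_mp, intro AE_I2 impI)
              fix x assume xS: "x \<in> S"
              show "ennreal ((m_hat X Y A N L n x \<omega> - m_L M (X 1) (Y 1) A L x)\<^sup>2) \<le> ennreal (e/2) + ennreal (W\<^sup>2) * indicator (B R) x"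
              proof (cases "x \<in> B R")
                case True
                have "(m_hat X Y A N L n x \<omega> - m_L M (X 1) (Y 1) A L x)\<^sup>2 = \<bar>m_hat X Y A N L n x \<omega> - m_L M (X 1) (Y 1) A L x\<bar>\<^sup>2" by simp
                also have "\<dots> \<le> W\<^sup>2" using db[OF xS, of n] by (intro power_mono) auto
                finally have "ennreal ((m_hat X Y A N L n x \<omega> - m_L M (X 1) (Y 1) A L x)\<^sup>2) \<le> ennreal (W\<^sup>2)" by (rule ennreal_leI)
                also have "\<dots> \<le> ennreal (e/2) + ennreal (W\<^sup>2) * indicator (B R) x" using True by simp
                finally show ?thesis .
              next
                case False
                then have "x \<in> T" using xS unfolding T_def B_def by auto
                then have "(m_hat X Y A N L n x \<omega> - m_L M (X 1) (Y 1) A L x)\<^sup>2 \<le> e/2"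
                  using elim e2 by (intro sq_le) (auto simp: dist_real_def)
                then show ?thesis using False by (simp add: ennreal_leI)
              qed
            qed
          qed
          also have "\<dots> = ennreal (e/2) + ennreal (W\<^sup>2) * emeasure \<mu> (B R)"
            using Bm by (subst nn_integral_add) (auto simp: nn_integral_cmult_indicator mu.emeasure_space_1)
          also have "\<dots> = ennreal (e/2 + W\<^sup>2 * measure \<mu> (B R))"
            using e by (simp add: mu.emeasure_eq_measure ennreal_plus ennreal_mult)
          also have "\<dots> \<le> ennreal e"
          proof (rule ennreal_leI)
            have "W\<^sup>2 * measure \<mu> (B R) \<le> W\<^sup>2 * e'" using R by (intro mult_left_mono) auto
            also have "W\<^sup>2 * e' = (e/2) * (W\<^sup>2 / (W\<^sup>2 + 1))" unfolding e'_def using W1 by (simp add: field_simps)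
            also have "\<dots> \<le> e/2" using e W1 by (intro mult_left_le) auto
            finally show "e/2 + W\<^sup>2 * measure \<mu> (B R) \<le> e" by simp
          qed
          finally show ?case .
        qed
      qed
    qed
  qed
  have partC: "((\<exists>D. AE \<omega> in M. \<bar>Y 1 \<omega>\<bar> \<le> D) \<or> (\<exists>R. AE x in \<mu>. norm x \<le> R)) \<longrightarrow>
      (AE \<omega> in M. (\<lambda>n. \<integral>\<^sup>+ x. ennreal ((m_hat X Y A N L n x \<omega> - m_L M (X 1) (Y 1) A L x)\<^sup>2) \<partial>\<mu>) \<longlonglongrightarrow> 0)"
  proof (intro impI, elim disjE exE)
    fix D0 assume "AE \<omega> in M. \<bar>Y 1 \<omega>\<bar> \<le> D0"
    then show "AE \<omega> in M. (\<lambda>n. \<integral>\<^sup>+ x. ennreal ((m_hat X Y A N L n x \<omega> - m_L M (X 1) (Y 1) A L x)\<^sup>2) \<partial>\<mu>) \<longlonglongrightarrow> 0"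
      by (rule partCi)
  next
    fix R0 assume "AE x in \<mu>. norm x \<le> R0"
    then show "AE \<omega> in M. (\<lambda>n. \<integral>\<^sup>+ x. ennreal ((m_hat X Y A N L n x \<omega> - m_L M (X 1) (Y 1) A L x)\<^sup>2) \<partial>\<mu>) \<longlonglongrightarrow> 0"
      by (rule partCii[OF bS_of])
  qed
  show ?thesis using partA partB partC by blast
qed


end
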